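(* Let $X$ be a topological space in which every open set is a union of countably many clopen sets. The following are equivalent: (1) every subspace of $X$ satisfies $\mathsf{U}_{fin}(\mathrm{O},\Gamma)$; (2) every $G_\delta$ subset of $X$ satisfies $\mathsf{U}_{fin}(\mathrm{O},\Gamma)$; (3) for every continuous $\Psi:X\to\mathrm{EF}$, $\Psi[X]$ is bounded; (4) $X$ satisfies $\mathsf{U}_{fin}(\mathrm{O},\Gamma)$ and $X$ is a $\sigma$ space.
   Context: A cover $\mathcal{U}$ of a space $Y$ is point-cofinite if it is infinite and each point of $Y$ belongs to all but finitely many members of $\mathcal{U}$. A space $Y$ satisfies $\mathsf{U}_{fin}(\mathrm{O},\Gamma)$ if whenever $\mathcal{U}_1,\mathcal{U}_2,\dots$ are countable open covers of $Y$ none of which contains a finite subcover, there are finite $\mathcal{F}_n\subseteq\mathcal{U}_n$ such that $\{\bigcup\mathcal{F}_n:n\in\mathbb{N}\}$ is a point-cofinite cover of $Y$. A space is a $\sigma$ space if each of its $G_\delta$ subsets is $F_\sigma$. Let $\overline{\mathbb{N}}=\mathbb{N}\cup\{\infty\}$ be the one-point compactification of $\mathbb{N}$, with $\overline{\mathbb{N}}^{\mathbb{N}}$ carrying the product topology; $\mathrm{EF}\subseteq\overline{\mathbb{N}}^{\mathbb{N}}$ is the subspace of those $f$ with $f(n)<\infty$ for all but finitely many $n$. A set $Y\subseteq\mathrm{EF}$ is bounded if there is $g\in\mathbb{N}^{\mathbb{N}}$ such that for each $f\in Y$, $f(n)\le g(n)$ for all but finitely many $n$. *)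

theory Defs
  imports "HOL-Analysis.Analysis"
begin

definition point_cofinite_cover :: "'a topology \<Rightarrow> 'a set set \<Rightarrow> bool" where
  "point_cofinite_cover T V \<longleftrightarrow>
     infinite V \<and> (\<forall>x\<in>topspace T. finite {W\<in>V. x \<notin> W})"

definition ctbl_open_cover_no_fin_sub :: "'a topology \<Rightarrow> 'a set set \<Rightarrow> bool" where
  "ctbl_open_cover_no_fin_sub T U \<longleftrightarrow>
     countable U \<and> (\<forall>W\<in>U. openin T W) \<and> topspace T \<subseteq> \<Union>U \<and>
     \<not> (\<exists>F\<subseteq>U. finite F \<and> topspace T \<subseteq> \<Union>F)"

definition Ufin_O_Gamma :: "'a topology \<Rightarrow> bool" where
  "Ufin_O_Gamma T \<longleftrightarrow>
     (\<forall>\<U> :: nat \<Rightarrow> 'a set set. (\<forall>n. ctbl_open_cover_no_fin_sub T (\<U> n)) \<longrightarrow>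
        (\<exists>\<F> :: nat \<Rightarrow> 'a set set. (\<forall>n. finite (\<F> n) \<and> \<F> n \<subseteq> \<U> n) \<and>
           point_cofinite_cover T (range (\<lambda>n. \<Union>(\<F> n)))))"

definition sigma_space :: "'a topology \<Rightarrow> bool" where
  "sigma_space T \<longleftrightarrow> (\<forall>S. gdelta_in T S \<longrightarrow> fsigma_in T S)"

text \<open>The one-point compactification of N is enat with its order topology
  (open_enat from HOL-Library.Extended_Real): N is discrete and neighbourhoods of
  infinity are the sets containing a tail {n<..}.\<close>
definition Nbar_top :: "enat topology" where
  "Nbar_top = euclidean"

definition EF_set :: "(nat \<Rightarrow> enat) set" where
  "EF_set = {f. finite {n. f n = \<infinity>}}"

definition EF_top :: "(nat \<Rightarrow> enat) topology" where
  "EF_top = subtopology (product_topology (\<lambda>_. Nbar_top) UNIV) EF_set"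

definition EF_bounded :: "(nat \<Rightarrow> enat) set \<Rightarrow> bool" where
  "EF_bounded Y \<longleftrightarrow> (\<exists>g :: nat \<Rightarrow> nat. \<forall>f\<in>Y. finite {n. \<not> f n \<le> enat (g n)})"

end

theory Submission
  imports Defs
begin



definition idx :: "(nat \<Rightarrow> 'a set) \<Rightarrow> 'a \<Rightarrow> enat" where
  "idx c x = (if \<exists>j. x \<in> c j then enat (LEAST j. x \<in> c j) else \<infinity>)"

lemma idx_le: "idx c x \<le> enat k \<longleftrightarrow> (\<exists>j\<le>k. x \<in> c j)"
proof
  assume "idx c x \<le> enat k"
  then have ex: "\<exists>j. x \<in> c j" and "(LEAST j. x \<in> c j) \<le> k"
    by (auto simp: idx_def split: if_splits)
  then show "\<exists>j\<le>k. x \<in> c j" using LeastI_ex[OF ex] by blast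
next
  assume "\<exists>j\<le>k. x \<in> c j"
  then obtain j where "j \<le> k" "x \<in> c j" by blast
  then show "idx c x \<le> enat k"
    by (auto simp: idx_def intro: order_trans[OF Least_le])
qed

lemma idx_inf: "idx c x = \<infinity> \<longleftrightarrow> (\<forall>j. x \<notin> c j)"
  by (auto simp: idx_def)

lemma idx_eq: "idx c x = enat k \<longleftrightarrow> x \<in> c k \<and> (\<forall>j<k. x \<notin> c j)"
proof
  assume h: "idx c x = enat k"
  then have ex: "\<exists>j. x \<in> c j" and l: "(LEAST j. x \<in> c j) = k"
    by (auto simp: idx_def split: if_splits)
  show "x \<in> c k \<and> (\<forall>j<k. x \<notin> c j)"
    using LeastI_ex[OF ex] not_less_Least l by blast
next
  assume "x \<in> c k \<and> (\<forall>j<k. x \<notin> c j)"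
  then show "idx c x = enat k"
    by (auto simp: idx_def intro!: Least_equality) (meson not_le)
qed

lemma cont_enat:
  assumes "\<And>k. openin X {x\<in>topspace X. f x = enat k}"
      and "\<And>k. openin X {x\<in>topspace X. enat k < f x}"
  shows "continuous_map X euclidean f"
  unfolding continuous_map_def
proof (intro conjI allI impI)
  show "f \<in> topspace X \<rightarrow> topspace euclidean" by simp
  fix U :: "enat set" assume "openin euclidean U"
  then have oU: "open U" by simp
  show "openin X {x \<in> topspace X. f x \<in> U}"
  proof (subst openin_subopen, intro ballI)
    fix x assume x: "x \<in> {x \<in> topspace X. f x \<in> U}"
    show "\<exists>T. openin X T \<and> x \<in> T \<and> T \<subseteq> {x \<in> topspace X. f x \<in> U}"
    proof (cases "f x")
      case (enat k)
      then show ?thesis using x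
        by (intro exI[of _ "{x\<in>topspace X. f x = enat k}"]) (auto intro: assms)
    next
      case infinity
      with x oU obtain n :: nat where n: "{enat n <..} \<subseteq> U"
        using open_enat_iff by auto
      show ?thesis using x infinity n
        by (intro exI[of _ "{x\<in>topspace X. enat n < f x}"]) (auto intro: assms)
    qed
  qed
qed

lemma idx_cont:
  assumes "\<And>j. openin X (c j)" "\<And>j. closedin X (c j)"
  shows "continuous_map X euclidean (idx c)"
proof (rule cont_enat)
  fix k
  have "{x\<in>topspace X. idx c x = enat k} = c k - (\<Union>j\<in>{..<k}. c j)"
    using openin_subset[OF assms(1)] by (auto simp: idx_eq)
  moreover have "openin X (c k - (\<Union>j\<in>{..<k}. c j))"
    by (intro openin_diff assms closedin_Union) (auto intro: assms)
  ultimately show "openin X {x\<in>topspace X. idx c x = enat k}" by simp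
  have "{x\<in>topspace X. enat k < idx c x} = topspace X - (\<Union>j\<in>{..k}. c j)"
    by (auto simp: not_le[symmetric] idx_le)
  moreover have "openin X (topspace X - (\<Union>j\<in>{..k}. c j))"
    by (intro openin_diff assms closedin_Union) (auto intro: assms)
  ultimately show "openin X {x\<in>topspace X. enat k < idx c x}" by simp
qed

lemma enat_le_Suc: "(e::enat) \<le> enat k \<longleftrightarrow> e < enat (Suc k)"
  by (cases e) auto

lemma cont_le_open:
  assumes "continuous_map X euclidean (f :: 'a \<Rightarrow> enat)"
  shows "openin X {x\<in>topspace X. f x \<le> enat k}"
proof -
  have "{x\<in>topspace X. f x \<le> enat k} = {x\<in>topspace X. f x \<in> {..<enat (Suc k)}}"
    using enat_le_Suc by auto
  then show ?thesis by (simp only:) (rule openin_continuous_map_preimage[OF assms], simp)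
qed

lemma cont_fin_open:
  assumes "continuous_map X euclidean (f :: 'a \<Rightarrow> enat)"
  shows "openin X {x\<in>topspace X. f x \<noteq> \<infinity>}"
proof -
  have "{x\<in>topspace X. f x \<noteq> \<infinity>} = {x\<in>topspace X. f x \<in> {..<\<infinity>}}"
    by auto
  then show ?thesis by (simp only:) (rule openin_continuous_map_preimage[OF assms], simp)
qed

lemma EF_coord:
  assumes "continuous_map X EF_top \<Psi>"
  shows "continuous_map X euclidean (\<lambda>x. \<Psi> x n)"
  using assms unfolding EF_top_def Nbar_top_def continuous_map_in_subtopology
    continuous_map_componentwise_UNIV by blast



lemma SEL:
  fixes g :: "nat \<Rightarrow> nat"
  assumes covers: "\<And>n. ctbl_open_cover_no_fin_sub T (\<U> n)"
    and c: "\<And>n j. \<exists>U\<in>\<U> n. c n j \<inter> topspace T \<subseteq> U"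
    and g: "\<And>y. y\<in>topspace T \<Longrightarrow> finite {n. \<not>(\<exists>j\<le>g n. y \<in> c n j)}"
  shows "\<exists>\<F>. (\<forall>n. finite (\<F> n) \<and> \<F> n \<subseteq> \<U> n) \<and> point_cofinite_cover T (range (\<lambda>n. \<Union>(\<F> n)))"
proof -
  define sel where "sel n j = (SOME U. U \<in> \<U> n \<and> c n j \<inter> topspace T \<subseteq> U)" for n j
  have selP: "sel n j \<in> \<U> n \<and> c n j \<inter> topspace T \<subseteq> sel n j" for n j
  proof -
    from c[of n j] obtain U where "U \<in> \<U> n \<and> c n j \<inter> topspace T \<subseteq> U" by blast
    then show ?thesis unfolding sel_def by (rule someI)
  qed
  define F where "F n = sel n ` {..g n}" for n
  have F1: "finite (F n) \<and> F n \<subseteq> \<U> n" for n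
    using selP by (auto simp: F_def)
  have cof: "finite {n. y \<notin> \<Union>(F n)}" if "y \<in> topspace T" for y
  proof (rule finite_subset[OF _ g[OF that]])
    show "{n. y \<notin> \<Union>(F n)} \<subseteq> {n. \<not>(\<exists>j\<le>g n. y \<in> c n j)}"
    proof
      fix n assume "n \<in> {n. y \<notin> \<Union>(F n)}"
      then have h1: "y \<notin> \<Union>(F n)" by simp
      have "\<not>(\<exists>j\<le>g n. y \<in> c n j)"
      proof
        assume "\<exists>j\<le>g n. y \<in> c n j"
        then obtain j where h: "j \<le> g n" "y \<in> c n j" by blast
        then have "y \<in> sel n j" using selP[of n j] that by blast
        moreover have "sel n j \<in> F n" using h(1) by (simp add: F_def)
        ultimately show False using h1 by blast
      qed
      then show "n \<in> {n. \<not>(\<exists>j\<le>g n. y \<in> c n j)}" by simp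
    qed
  qed
  have notcov: "\<exists>y\<in>topspace T. y \<notin> \<Union>(F n)" for n
  proof -
    have "\<not> (\<exists>F'\<subseteq>\<U> n. finite F' \<and> topspace T \<subseteq> \<Union>F')"
      using covers[of n] unfolding ctbl_open_cover_no_fin_sub_def by blast
    then show ?thesis using F1[of n] by blast
  qed
  have inf: "infinite (range (\<lambda>n. \<Union>(F n)))"
  proof
    assume "finite (range (\<lambda>n. \<Union>(F n)))"
    then obtain n0 where n0: "infinite {n. \<Union>(F n) = \<Union>(F n0)}"
      using pigeonhole_infinite[OF infinite_UNIV_nat, of "\<lambda>n. \<Union>(F n)"] by (simp only: UNIV_I mem_Collect_eq simp_thms Bex_def) blast
    obtain y where y: "y \<in> topspace T" "y \<notin> \<Union>(F n0)" using notcov by blast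
    have "{n. \<Union>(F n) = \<Union>(F n0)} \<subseteq> {n. y \<notin> \<Union>(F n)}" using y by auto
    then show False using cof[OF y(1)] n0 by (meson finite_subset)
  qed
  have "point_cofinite_cover T (range (\<lambda>n. \<Union>(F n)))"
    unfolding point_cofinite_cover_def
  proof (intro conjI inf ballI)
    fix y assume y: "y \<in> topspace T"
    have sub: "{W \<in> range (\<lambda>n. \<Union>(F n)). y \<notin> W} \<subseteq> (\<lambda>n. \<Union>(F n)) ` {n. y \<notin> \<Union>(F n)}"
      by auto
    show "finite {W \<in> range (\<lambda>n. \<Union>(F n)). y \<notin> W}"
      by (rule finite_subset[OF sub finite_imageI[OF cof[OF y]]])
  qed
  then show ?thesis using F1 by blast
qed


lemma PIECES:
  assumes clopen_base: "\<And>U. openin X U \<Longrightarrow>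
     \<exists>\<C>. countable \<C> \<and> (\<forall>C\<in>\<C>. openin X C \<and> closedin X C) \<and> U = \<Union>\<C>"
    and Y: "Y \<subseteq> topspace X"
    and cov: "ctbl_open_cover_no_fin_sub (subtopology X Y) \<U>"
  shows "\<exists>c::nat \<Rightarrow> 'a set. (\<forall>j. openin X (c j) \<and> closedin X (c j))
           \<and> (\<forall>j. \<exists>U\<in>\<U>. c j \<inter> Y \<subseteq> U) \<and> Y \<subseteq> \<Union>(range c)"
proof -
  have top: "topspace (subtopology X Y) = Y" using Y by auto
  have cnt: "countable \<U>" and op: "\<And>U. U \<in> \<U> \<Longrightarrow> openin (subtopology X Y) U"
    and cv: "Y \<subseteq> \<Union>\<U>" and nf: "\<not> (\<exists>F\<subseteq>\<U>. finite F \<and> Y \<subseteq> \<Union>F)"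
    using cov unfolding ctbl_open_cover_no_fin_sub_def top by auto
  have ex1: "\<forall>U\<in>\<U>. \<exists>V. openin X V \<and> U = V \<inter> Y"
    using op by (auto simp: openin_subtopology)
  from bchoice[OF ex1] obtain V where V0: "\<forall>U\<in>\<U>. openin X (V U) \<and> U = V U \<inter> Y"
    by blast
  have V: "\<And>U. U \<in> \<U> \<Longrightarrow> openin X (V U) \<and> U = V U \<inter> Y" by (rule bspec[OF V0])
  have ex2: "\<forall>U\<in>\<U>. \<exists>\<C>. countable \<C> \<and> (\<forall>C\<in>\<C>. openin X C \<and> closedin X C) \<and> V U = \<Union>\<C>"
    using clopen_base V by blast
  from bchoice[OF ex2] obtain CC where CC0: "\<forall>U\<in>\<U>. countable (CC U) \<and> (\<forall>C\<in>CC U. openin X C \<and> closedin X C) \<and> V U = \<Union>(CC U)"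
    by (elim exE) blast
  have CC: "\<And>U. U \<in> \<U> \<Longrightarrow> countable (CC U) \<and> (\<forall>C\<in>CC U. openin X C \<and> closedin X C) \<and> V U = \<Union>(CC U)"
    by (rule bspec[OF CC0])
  define P where "P = (\<Union>U\<in>\<U>. CC U)"
  have Pc: "countable P" unfolding P_def using cnt CC by auto
  have YP: "Y \<subseteq> \<Union>P"
  proof
    fix y assume y: "y \<in> Y"
    then obtain U where U: "U \<in> \<U>" "y \<in> U" using cv by auto
    then have "y \<in> V U" using V[OF U(1)] by blast
    then obtain C where "C \<in> CC U" "y \<in> C" using CC[OF U(1)] by auto
    then show "y \<in> \<Union>P" unfolding P_def using U(1) by auto
  qed
  have Yne: "Y \<noteq> {}"
  proof
    assume "Y = {}"
    then have "{} \<subseteq> \<U> \<and> finite {} \<and> Y \<subseteq> \<Union>{}" by simp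
    with nf show False by blast
  qed
  then have Pne: "P \<noteq> {}" using YP by auto
  define c where "c = from_nat_into P"
  have rc: "range c = P" unfolding c_def using range_from_nat_into[OF Pne Pc] .
  show ?thesis
  proof (intro exI[of _ c] conjI allI)
    fix j
    have "c j \<in> P" using rc by auto
    then obtain U where U: "U \<in> \<U>" "c j \<in> CC U" unfolding P_def by auto
    show "openin X (c j)" using CC[OF U(1)] U(2) by auto
    show "closedin X (c j)" using CC[OF U(1)] U(2) by auto
    have "c j \<subseteq> V U" using CC[OF U(1)] U(2) by auto
    then have "c j \<inter> Y \<subseteq> U" using V[OF U(1)] by auto
    then show "\<exists>U\<in>\<U>. c j \<inter> Y \<subseteq> U" using U(1) by blast
  next
    show "Y \<subseteq> \<Union>(range c)" using rc YP by simp
  qed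
qed


lemma max_bound:
  fixes kk :: "nat \<Rightarrow> nat"
  shows "\<exists>K. \<forall>j\<le>i. kk j \<le> K"
  by (rule exI[of _ "Max (kk ` {..i})"]) auto

lemma L1:
  fixes A :: "nat \<Rightarrow> nat \<Rightarrow> 'a set"
  assumes U: "Ufin_O_Gamma T"
    and Aop: "\<And>n k. openin T (A n k)"
    and Amono: "\<And>n k. A n k \<subseteq> A n (Suc k)"
    and Acov: "\<And>n. topspace T \<subseteq> (\<Union>k. A n k)"
  shows "\<exists>g. \<forall>x\<in>topspace T. finite {n. x \<notin> A n (g n)}"
proof -
  have mono: "A n k \<subseteq> A n k'" if "k \<le> k'" for n k k'
    using lift_Suc_mono_le[of "A n", OF Amono that] .
  define N' where "N' = {n. \<forall>k. \<not> topspace T \<subseteq> A n k}"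
  define g0 where "g0 n = (SOME k. topspace T \<subseteq> A n k)" for n
  have g0: "topspace T \<subseteq> A n (g0 n)" if "n \<notin> N'" for n
  proof -
    from that obtain k where "topspace T \<subseteq> A n k" unfolding N'_def by auto
    then show ?thesis unfolding g0_def by (rule someI)
  qed
  show ?thesis
  proof (cases "finite N'")
    case True
    show ?thesis
    proof (intro exI[of _ g0] ballI)
      fix x assume x: "x \<in> topspace T"
      have "{n. x \<notin> A n (g0 n)} \<subseteq> N'" using g0 x by blast
      then show "finite {n. x \<notin> A n (g0 n)}" using True by (rule finite_subset)
    qed
  next
    case False
    define e where "e = enumerate N'"
    have e_sm: "strict_mono e" unfolding e_def using False by (rule strict_mono_enumerate)
    have e_in: "e i \<in> N'" for i unfolding e_def using False by (rule enumerate_in_set)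
    have e_rng: "range e = N'" unfolding e_def using False by (rule range_enumerate)
    define B where "B i k = topspace T \<inter> (\<Inter>j\<in>{..i}. A (e j) k)" for i k
    have Bop: "openin T (B i k)" for i k
      unfolding B_def by (intro openin_Int openin_topspace openin_Inter) (auto intro: Aop)
    have Bmono: "B i k \<subseteq> B i k'" if "k \<le> k'" for i k k'
      unfolding B_def using mono[OF that] by blast
    have BA: "B i k \<subseteq> A (e j) k" if "j \<le> i" for i j k
      unfolding B_def using that by blast
    have Bcov: "topspace T \<subseteq> (\<Union>k. B i k)" for i
    proof
      fix x assume x: "x \<in> topspace T"
      have "\<forall>j. \<exists>k. x \<in> A (e j) k" using Acov x by blast
      then obtain kk where kk: "\<forall>j. x \<in> A (e j) (kk j)"
        using choice[OF \<open>\<forall>j. \<exists>k. x \<in> A (e j) k\<close>] by (elim exE) (rule that)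
      obtain K where K: "\<forall>j\<le>i. kk j \<le> K" using max_bound by blast
      have "x \<in> A (e j) K" if "j \<le> i" for j
        using mono[of "kk j" K "e j"] K that kk by blast
      then have "x \<in> B i K" unfolding B_def using x by blast
      then show "x \<in> (\<Union>k. B i k)" by blast
    qed
    have Bbound: "\<exists>K. \<Union>F \<subseteq> B i K" if hF: "F \<subseteq> range (B i)" "finite F" for F i
    proof -
      obtain S where S: "finite S" "F = B i ` S"
        using finite_subset_image[OF hF(2) hF(1)] by auto
      have "B i s \<subseteq> B i (Max (insert 0 S))" if "s \<in> S" for s
        by (rule Bmono) (simp add: S(1) that)
      then have "\<Union>F \<subseteq> B i (Max (insert 0 S))"
        unfolding S(2) by blast
      then show ?thesis by blast
    qed
    have covs: "ctbl_open_cover_no_fin_sub T (range (B i))" for i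
      unfolding ctbl_open_cover_no_fin_sub_def
    proof (intro conjI)
      show "countable (range (B i))" by simp
      show "\<forall>W\<in>range (B i). openin T W" using Bop by blast
      show "topspace T \<subseteq> \<Union>(range (B i))" using Bcov[of i] by simp
      show "\<not> (\<exists>F\<subseteq>range (B i). finite F \<and> topspace T \<subseteq> \<Union>F)"
      proof
        assume "\<exists>F\<subseteq>range (B i). finite F \<and> topspace T \<subseteq> \<Union>F"
        then obtain F where F: "F\<subseteq>range (B i)" "finite F" "topspace T \<subseteq> \<Union>F"
          by (elim exE conjE) (rule that)
        obtain K where "\<Union>F \<subseteq> B i K" using Bbound[OF F(1,2)] by (elim exE) (rule that)
        then have "topspace T \<subseteq> A (e i) K" using F(3) BA[of i i K] by (meson order_trans order_refl)
        moreover have "\<forall>k. \<not> topspace T \<subseteq> A (e i) k" using e_in[of i] unfolding N'_def by simp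
        ultimately show False by blast
      qed
    qed
    obtain F where F1: "\<And>i. finite (F i) \<and> F i \<subseteq> range (B i)"
      and F2: "point_cofinite_cover T (range (\<lambda>i. \<Union>(F i)))"
    proof -
      have "(\<forall>n. ctbl_open_cover_no_fin_sub T (range (B n))) \<longrightarrow>
        (\<exists>\<F> :: nat \<Rightarrow> 'a set set. (\<forall>n. finite (\<F> n) \<and> \<F> n \<subseteq> range (B n)) \<and>
           point_cofinite_cover T (range (\<lambda>n. \<Union>(\<F> n))))"
        using U unfolding Ufin_O_Gamma_def by (rule spec)
      then have "\<exists>\<F> :: nat \<Rightarrow> 'a set set. (\<forall>n. finite (\<F> n) \<and> \<F> n \<subseteq> range (B n)) \<and>
           point_cofinite_cover T (range (\<lambda>n. \<Union>(\<F> n)))" using covs by blast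
      then obtain FF where FF: "\<forall>n. finite (FF n) \<and> FF n \<subseteq> range (B n)"
        "point_cofinite_cover T (range (\<lambda>n. \<Union>(FF n)))" by blast
      show ?thesis by (rule that[of FF]) (use FF in blast)+
    qed
    define W where "W = (\<lambda>i. \<Union>(F i))"
    have F2': "point_cofinite_cover T (range W)" using F2 by (simp add: W_def)
    have Winf: "infinite (range W)" using F2' unfolding point_cofinite_cover_def by (rule conjunct1)
    have Wcof: "finite {V \<in> range W. x \<notin> V}" if "x \<in> topspace T" for x
      using F2' that unfolding point_cofinite_cover_def by blast
    have "\<exists>K. W i \<subseteq> B i K" for i unfolding W_def using Bbound F1[of i] by blast
    then have "\<forall>i. \<exists>K. W i \<subseteq> B i K" by blast
    then obtain K where K0: "\<forall>i. W i \<subseteq> B i (K i)"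
      using choice[OF \<open>\<forall>i. \<exists>K. W i \<subseteq> B i K\<close>] by (elim exE) (rule that)
    have K: "W i \<subseteq> B i (K i)" for i using K0 by blast
    have exm: "\<exists>j. W j \<notin> W ` {..<i}" for i
    proof (rule ccontr)
      assume "\<not> (\<exists>j. W j \<notin> W ` {..<i})"
      then have "range W \<subseteq> W ` {..<i}" by blast
      then have "finite (range W)" by (rule finite_subset) simp
      then show False using Winf by blast
    qed
    define m where "m i = (SOME j. W j \<notin> W ` {..<i})" for i
    have m: "W (m i) \<notin> W ` {..<i}" for i
      unfolding m_def using someI_ex[OF exm] .
    have mi: "i \<le> m i" for i
    proof (rule ccontr)
      assume "\<not> i \<le> m i"
      then have "W (m i) \<in> W ` {..<i}" by auto
      then show False using m by blast
    qed
    define g where "g n = (if n \<in> N' then K (m (inv e n)) else g0 n)" for n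
    show ?thesis
    proof (intro exI[of _ g] ballI)
      fix x assume x: "x \<in> topspace T"
      have fin1: "finite {i. W (m i) = V}" if "V \<in> range W" for V
      proof -
        from that obtain j0 where j0: "V = W j0" by blast
        have "{i. W (m i) = V} \<subseteq> {..j0}"
        proof
          fix i assume "i \<in> {i. W (m i) = V}"
          then have "W (m i) = W j0" using j0 by simp
          have "\<not> j0 < i"
          proof
            assume "j0 < i"
            then have "W j0 \<in> W ` {..<i}" by simp
            then show False using m[of i] \<open>W (m i) = W j0\<close> by simp
          qed
          then show "i \<in> {..j0}" by simp
        qed
        then show ?thesis by (rule finite_subset) simp
      qed
      have "{i. x \<notin> W (m i)} \<subseteq> (\<Union>V\<in>{V \<in> range W. x \<notin> V}. {i. W (m i) = V})"
        by auto
      moreover have "finite (\<Union>V\<in>{V \<in> range W. x \<notin> V}. {i. W (m i) = V})"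
        using Wcof[OF x] fin1 by (intro finite_UN_I) auto
      ultimately have fin2: "finite {i. x \<notin> W (m i)}" by (rule finite_subset)
      have "{n. x \<notin> A n (g n)} \<subseteq> e ` {i. x \<notin> W (m i)}"
      proof
        fix n assume "n \<in> {n. x \<notin> A n (g n)}"
        then have n: "x \<notin> A n (g n)" by simp
        have nN: "n \<in> N'" using n g0 x unfolding g_def by (cases "n \<in> N'") auto
        then obtain i where i: "n = e i" using e_rng by blast
        have ie: "inv e n = i" using i strict_mono_imp_inj_on[OF e_sm] by (simp add: inv_f_f)
        have "x \<notin> A (e i) (K (m i))" using n nN ie unfolding g_def i by simp
        then have "x \<notin> B (m i) (K (m i))" using BA[OF mi[of i]] by blast
        then have "x \<notin> W (m i)" using K[of "m i"] by blast
        then show "n \<in> e ` {i. x \<notin> W (m i)}" using i by blast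
      qed
      then show "finite {n. x \<notin> A n (g n)}"
        by (rule finite_subset) (rule finite_imageI[OF fin2])
    qed
  qed
qed



lemma CLOPEN_SEQ:
  assumes clopen_base: "\<And>U. openin X U \<Longrightarrow>
     \<exists>\<C>. countable \<C> \<and> (\<forall>C\<in>\<C>. openin X C \<and> closedin X C) \<and> U = \<Union>\<C>"
    and V: "openin X V"
  shows "\<exists>d::nat \<Rightarrow> 'a set. (\<forall>k. openin X (d k) \<and> closedin X (d k)) \<and> V = \<Union>(range d)
          \<and> (\<forall>k k'. k \<noteq> k' \<longrightarrow> d k \<inter> d k' = {})"
proof -
  obtain \<C> where C: "countable \<C>" "\<forall>C\<in>\<C>. openin X C \<and> closedin X C" "V = \<Union>\<C>"
    using clopen_base[OF V] by (elim exE conjE) (rule that)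
  define e where "e = from_nat_into (insert {} \<C>)"
  have re: "range e = insert {} \<C>" unfolding e_def
    by (rule range_from_nat_into) (use C(1) in auto)
  have ecl: "openin X (e k) \<and> closedin X (e k)" for k
  proof -
    have "e k \<in> insert {} \<C>" using re by auto
    then show ?thesis using C(2) by auto
  qed
  define d where "d k = e k - (\<Union>i\<in>{..<k}. e i)" for k
  show ?thesis
  proof (intro exI[of _ d] conjI allI impI)
    fix k
    show "openin X (d k)" unfolding d_def
      by (intro openin_diff closedin_Union) (auto simp: ecl)
    show "closedin X (d k)" unfolding d_def
      by (intro closedin_diff openin_Union) (auto simp: ecl)
  next
    have "\<Union>(range d) = \<Union>(range e)"
    proof
      show "\<Union>(range d) \<subseteq> \<Union>(range e)" unfolding d_def by auto
      show "\<Union>(range e) \<subseteq> \<Union>(range d)"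
      proof
        fix x assume "x \<in> \<Union>(range e)"
        then obtain k where k: "x \<in> e k" by auto
        define k0 where "k0 = (LEAST k. x \<in> e k)"
        have "x \<in> e k0" unfolding k0_def by (rule LeastI[of "\<lambda>k. x \<in> e k", OF k])
        moreover have "x \<notin> e i" if "i < k0" for i
          using not_less_Least[OF that[unfolded k0_def]] .
        ultimately have "x \<in> d k0" unfolding d_def by auto
        then show "x \<in> \<Union>(range d)" by auto
      qed
    qed
    also have "\<dots> = V" using re C(3) by simp
    finally show "V = \<Union>(range d)" by simp
  next
    fix k k' :: nat assume "k \<noteq> k'"
    then consider "k < k'" | "k' < k" by linarith
    then show "d k \<inter> d k' = {}"
      by cases (auto simp: d_def)
  qed
qed

lemma subsingleton_finite: "(\<And>a b. a \<in> S \<Longrightarrow> b \<in> S \<Longrightarrow> a = b) \<Longrightarrow> finite S"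
proof (cases "S = {}")
  case False
  assume h: "\<And>a b. a \<in> S \<Longrightarrow> b \<in> S \<Longrightarrow> a = b"
  from False obtain a where a: "a \<in> S" by blast
  have "S \<subseteq> {a}" using h a by blast
  then show ?thesis by (rule finite_subset) simp
qed simp

lemma CH:
  assumes clopen_base: "\<And>U. openin X U \<Longrightarrow>
     \<exists>\<C>. countable \<C> \<and> (\<forall>C\<in>\<C>. openin X C \<and> closedin X C) \<and> U = \<Union>\<C>"
    and UX: "Ufin_O_Gamma X" and K: "closedin X K"
  shows "Ufin_O_Gamma (subtopology X K)"
  unfolding Ufin_O_Gamma_def
proof (intro allI impI)
  fix \<U> :: "nat \<Rightarrow> 'a set set"
  assume cov: "\<forall>n. ctbl_open_cover_no_fin_sub (subtopology X K) (\<U> n)"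
  have Ksub: "K \<subseteq> topspace X" using K by (rule closedin_subset)
  have topK: "topspace (subtopology X K) = K" using Ksub by auto
  have ex: "\<forall>n. \<exists>c :: nat \<Rightarrow> _. (\<forall>j. openin X (c j) \<and> closedin X (c j))
           \<and> (\<forall>j. \<exists>U\<in>\<U> n. c j \<inter> K \<subseteq> U) \<and> K \<subseteq> \<Union>(range c)"
    using PIECES[OF clopen_base Ksub] cov by blast
  from choice[OF ex] obtain c :: "nat \<Rightarrow> nat \<Rightarrow> _" where c: "\<forall>n. (\<forall>j. openin X (c n j) \<and> closedin X (c n j))
           \<and> (\<forall>j. \<exists>U\<in>\<U> n. c n j \<inter> K \<subseteq> U) \<and> K \<subseteq> \<Union>(range (c n))"
    by (elim exE) (erule that)
  define A where "A n k = (topspace X - K) \<union> (topspace X \<inter> (\<Union>j\<in>{..k}. c n j))" for n k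
  have "\<exists>g. \<forall>x\<in>topspace X. finite {n. x \<notin> A n (g n)}"
  proof (rule L1[OF UX])
    fix n k
    show "openin X (A n k)" unfolding A_def
      using c by (intro openin_Un openin_diff openin_Int openin_topspace K openin_Union) auto
    show "A n k \<subseteq> A n (Suc k)" unfolding A_def by (auto simp: atMost_Suc)
  next
    fix n
    show "topspace X \<subseteq> (\<Union>k. A n k)"
    proof
      fix x assume x: "x \<in> topspace X"
      show "x \<in> (\<Union>k. A n k)"
      proof (cases "x \<in> K")
        case True
        then obtain j where "x \<in> c n j" using c by blast
        then have "x \<in> A n j" unfolding A_def using x by auto
        then show ?thesis by blast
      next
        case False
        then have "x \<in> A n 0" unfolding A_def using x by auto
        then show ?thesis by blast
      qed
    qed
  qed
  then obtain g where g: "\<forall>x\<in>topspace X. finite {n. x \<notin> A n (g n)}" by (elim exE) (rule that)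
  show "\<exists>\<F>. (\<forall>n. finite (\<F> n) \<and> \<F> n \<subseteq> \<U> n) \<and> point_cofinite_cover (subtopology X K) (range (\<lambda>n. \<Union>(\<F> n)))"
  proof (rule SEL[of _ _ c g])
    show "ctbl_open_cover_no_fin_sub (subtopology X K) (\<U> n)" for n using cov by blast
    show "\<exists>U\<in>\<U> n. c n j \<inter> topspace (subtopology X K) \<subseteq> U" for n j
      unfolding topK using c by blast
    fix y assume y: "y \<in> topspace (subtopology X K)"
    then have yK: "y \<in> K" and yX: "y \<in> topspace X" using topK Ksub by auto
    have "{n. \<not>(\<exists>j\<le>g n. y \<in> c n j)} \<subseteq> {n. y \<notin> A n (g n)}"
      unfolding A_def using yK by auto
    then show "finite {n. \<not>(\<exists>j\<le>g n. y \<in> c n j)}"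
      by (rule finite_subset) (use g yX in blast)
  qed
qed



lemma B23:
  assumes P2: "\<forall>Y. gdelta_in X Y \<longrightarrow> Ufin_O_Gamma (subtopology X Y)"
    and Psi: "continuous_map X EF_top \<Psi>"
  shows "EF_bounded (\<Psi> ` topspace X)"
proof -
  have coord: "continuous_map X euclidean (\<lambda>x. \<Psi> x n)" for n using EF_coord[OF Psi] .
  have inEF: "\<Psi> x \<in> EF_set" if "x \<in> topspace X" for x
  proof -
    have "\<Psi> \<in> topspace X \<rightarrow> EF_set"
      using Psi unfolding EF_top_def continuous_map_in_subtopology by (rule conjunct2)
    then show ?thesis using that by (rule funcset_mem)
  qed
  define Y where "Y m = {x\<in>topspace X. \<forall>n\<ge>m. \<Psi> x n \<noteq> \<infinity>}" for m
  have Ysub: "Y m \<subseteq> topspace X" for m unfolding Y_def by blast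
  have Ygd: "gdelta_in X (Y m)" for m
  proof -
    have eq: "Y m = \<Inter>(range (\<lambda>n. {x\<in>topspace X. \<Psi> x (n+m) \<noteq> \<infinity>}))"
    proof
      show "Y m \<subseteq> \<Inter>(range (\<lambda>n. {x\<in>topspace X. \<Psi> x (n+m) \<noteq> \<infinity>}))"
        unfolding Y_def by auto
      show "\<Inter>(range (\<lambda>n. {x\<in>topspace X. \<Psi> x (n+m) \<noteq> \<infinity>})) \<subseteq> Y m"
      proof
        fix x assume x: "x \<in> \<Inter>(range (\<lambda>n. {x\<in>topspace X. \<Psi> x (n+m) \<noteq> \<infinity>}))"
        have "x \<in> topspace X" using x by auto
        moreover have "\<Psi> x n \<noteq> \<infinity>" if "n \<ge> m" for n
        proof -
          have "n = (n - m) + m" using that by simp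
          have "x \<in> {x\<in>topspace X. \<Psi> x ((n - m)+m) \<noteq> \<infinity>}" using x by (rule INT_D) simp
          then show ?thesis using \<open>n = (n - m) + m\<close> by simp
        qed
        ultimately show "x \<in> Y m" unfolding Y_def by blast
      qed
    qed
    show ?thesis unfolding gdelta_in_alt
    proof (intro conjI Ysub)
      show "(countable intersection_of openin X) (Y m)"
        unfolding intersection_of_def
        by (rule exI[of _ "range (\<lambda>n. {x\<in>topspace X. \<Psi> x (n+m) \<noteq> \<infinity>})"])
           (use eq cont_fin_open[OF coord] in auto)
    qed
  qed
  have Gm: "\<exists>g. \<forall>x\<in>topspace (subtopology X (Y m)).
      finite {n. x \<notin> {x\<in>Y m. \<Psi> x (n+m) \<le> enat (g n)}}" for m
  proof (rule L1)
    show "Ufin_O_Gamma (subtopology X (Y m))" using P2 Ygd by blast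
    fix n k
    have "{x\<in>Y m. \<Psi> x (n+m) \<le> enat k} = Y m \<inter> {x\<in>topspace X. \<Psi> x (n+m) \<le> enat k}"
      using Ysub by blast
    then show "openin (subtopology X (Y m)) {x\<in>Y m. \<Psi> x (n+m) \<le> enat k}"
      using openin_subtopology_Int2[OF cont_le_open[OF coord]] by simp
    show "{x\<in>Y m. \<Psi> x (n+m) \<le> enat k} \<subseteq> {x\<in>Y m. \<Psi> x (n+m) \<le> enat (Suc k)}"
      using order_trans by fastforce
  next
    fix n
    show "topspace (subtopology X (Y m)) \<subseteq> (\<Union>k. {x\<in>Y m. \<Psi> x (n+m) \<le> enat k})"
    proof
      fix x assume "x \<in> topspace (subtopology X (Y m))"
      then have x: "x \<in> Y m" by simp
      then have "\<Psi> x (n+m) \<noteq> \<infinity>" unfolding Y_def by simp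
      then obtain k where "\<Psi> x (n+m) = enat k" by auto
      then have "x \<in> {x\<in>Y m. \<Psi> x (n+m) \<le> enat k}" using x by simp
      then show "x \<in> (\<Union>k. {x\<in>Y m. \<Psi> x (n+m) \<le> enat k})" by blast
    qed
  qed
  then have "\<forall>m. \<exists>g. \<forall>x\<in>Y m. finite {n. x \<notin> {x\<in>Y m. \<Psi> x (n+m) \<le> enat (g n)}}"
    using Ysub by (simp add: Int_absorb1)
  from choice[OF this] obtain G :: "nat \<Rightarrow> nat \<Rightarrow> nat"
    where G: "\<forall>m. \<forall>x\<in>Y m. finite {n. x \<notin> {x\<in>Y m. \<Psi> x (n+m) \<le> enat (G m n)}}"
    by (elim exE) (erule that)
  define g where "g n = Max ((\<lambda>m. G m (n - m)) ` {..n})" for n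
  show ?thesis unfolding EF_bounded_def
  proof (intro exI[of _ g] ballI)
    fix f assume "f \<in> \<Psi> ` topspace X"
    then obtain x where x: "x \<in> topspace X" and f: "f = \<Psi> x" by blast
    have "finite {n. \<Psi> x n = \<infinity>}" using inEF[OF x] unfolding EF_set_def by simp
    then obtain m where m: "{n. \<Psi> x n = \<infinity>} \<subseteq> {..<m}" using finite_nat_bounded by blast
    have xY: "x \<in> Y m" unfolding Y_def using x m by force
    have "{n. \<not> f n \<le> enat (g n)} \<subseteq> {..<m} \<union> (\<lambda>n'. n'+m) ` {n'. x \<notin> {x\<in>Y m. \<Psi> x (n'+m) \<le> enat (G m n')}}"
    proof
      fix n assume "n \<in> {n. \<not> f n \<le> enat (g n)}"
      then have n: "\<not> \<Psi> x n \<le> enat (g n)" using f by simp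
      show "n \<in> {..<m} \<union> (\<lambda>n'. n'+m) ` {n'. x \<notin> {x\<in>Y m. \<Psi> x (n'+m) \<le> enat (G m n')}}"
      proof (cases "n < m")
        case False
        then have nm: "n = (n - m) + m" by simp
        have "G m (n - m) \<le> g n" unfolding g_def
          by (rule Max_ge) (use False in auto)
        then have "\<not> \<Psi> x ((n - m) + m) \<le> enat (G m (n - m))"
          using n nm by (metis enat_ord_simps(1) order_trans)
        then have "n - m \<in> {n'. x \<notin> {x\<in>Y m. \<Psi> x (n'+m) \<le> enat (G m n')}}" by simp
        then show ?thesis using nm by blast
      qed simp
    qed
    moreover have "finite ({..<m} \<union> (\<lambda>n'. n'+m) ` {n'. x \<notin> {x\<in>Y m. \<Psi> x (n'+m) \<le> enat (G m n')}})"
      using G xY by simp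
    ultimately show "finite {n. \<not> f n \<le> enat (g n)}" by (rule finite_subset)
  qed
qed

lemma C3a:
  assumes clopen_base: "\<And>U. openin X U \<Longrightarrow>
     \<exists>\<C>. countable \<C> \<and> (\<forall>C\<in>\<C>. openin X C \<and> closedin X C) \<and> U = \<Union>\<C>"
    and P3: "\<forall>\<Psi>. continuous_map X EF_top \<Psi> \<longrightarrow> EF_bounded (\<Psi> ` topspace X)"
  shows "Ufin_O_Gamma X"
  unfolding Ufin_O_Gamma_def
proof (intro allI impI)
  fix \<U> :: "nat \<Rightarrow> 'a set set"
  assume cov: "\<forall>n. ctbl_open_cover_no_fin_sub X (\<U> n)"
  have cov': "ctbl_open_cover_no_fin_sub (subtopology X (topspace X)) (\<U> n)" for n
    using cov by simp
  have ex: "\<forall>n. \<exists>c :: nat \<Rightarrow> _. (\<forall>j. openin X (c j) \<and> closedin X (c j))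
           \<and> (\<forall>j. \<exists>U\<in>\<U> n. c j \<inter> topspace X \<subseteq> U) \<and> topspace X \<subseteq> \<Union>(range c)"
    using PIECES[OF clopen_base subset_refl cov'] by blast
  from choice[OF ex] obtain c :: "nat \<Rightarrow> nat \<Rightarrow> _" where c: "\<forall>n. (\<forall>j. openin X (c n j) \<and> closedin X (c n j))
           \<and> (\<forall>j. \<exists>U\<in>\<U> n. c n j \<inter> topspace X \<subseteq> U) \<and> topspace X \<subseteq> \<Union>(range (c n))"
    by (elim exE) (erule that)
  define \<Psi> where "\<Psi> x n = idx (c n) x" for x n
  have cont: "continuous_map X EF_top \<Psi>"
    unfolding EF_top_def continuous_map_in_subtopology Nbar_top_def continuous_map_componentwise_UNIV
  proof (intro conjI allI)
    fix n show "continuous_map X euclidean (\<lambda>x. \<Psi> x n)"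
      unfolding \<Psi>_def by (rule idx_cont) (use c in blast)+
  next
    show "\<Psi> \<in> topspace X \<rightarrow> EF_set"
    proof
      fix x assume x: "x \<in> topspace X"
      have e: "{n. \<Psi> x n = \<infinity>} = {}"
      proof -
        have "\<Psi> x n \<noteq> \<infinity>" for n
        proof -
          obtain j where "x \<in> c n j" using c x by blast
          then show ?thesis unfolding \<Psi>_def idx_inf by blast
        qed
        then show ?thesis by blast
      qed
      show "\<Psi> x \<in> EF_set" unfolding EF_set_def mem_Collect_eq e by simp
    qed
  qed
  then obtain g where g: "\<forall>f\<in>\<Psi> ` topspace X. finite {n. \<not> f n \<le> enat (g n)}"
    using P3 unfolding EF_bounded_def by blast
  show "\<exists>\<F>. (\<forall>n. finite (\<F> n) \<and> \<F> n \<subseteq> \<U> n) \<and> point_cofinite_cover X (range (\<lambda>n. \<Union>(\<F> n)))"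
  proof (rule SEL[of _ _ c g])
    show "ctbl_open_cover_no_fin_sub X (\<U> n)" for n using cov by blast
    show "\<exists>U\<in>\<U> n. c n j \<inter> topspace X \<subseteq> U" for n j using c by blast
    fix y assume y: "y \<in> topspace X"
    have "{n. \<not>(\<exists>j\<le>g n. y \<in> c n j)} = {n. \<not> \<Psi> y n \<le> enat (g n)}"
      unfolding \<Psi>_def idx_le by simp
    then show "finite {n. \<not>(\<exists>j\<le>g n. y \<in> c n j)}" using g y by simp
  qed
qed



lemma C3b:
  assumes clopen_base: "\<And>U. openin X U \<Longrightarrow>
     \<exists>\<C>. countable \<C> \<and> (\<forall>C\<in>\<C>. openin X C \<and> closedin X C) \<and> U = \<Union>\<C>"
    and P3: "\<forall>\<Psi>. continuous_map X EF_top \<Psi> \<longrightarrow> EF_bounded (\<Psi> ` topspace X)"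
  shows "sigma_space X"
  unfolding sigma_space_def
proof (intro allI impI)
  fix G assume gd: "gdelta_in X G"
  have Gsub: "G \<subseteq> topspace X" using gd by (rule gdelta_in_subset)
  have "(countable intersection_of openin X) G" using gd unfolding gdelta_in_alt by (rule conjunct2)
  then obtain OS where O: "countable OS" "OS \<subseteq> Collect (openin X)" "\<Inter> OS = G"
    unfolding intersection_of_def by (elim exE conjE) (rule that)
  show "fsigma_in X G"
  proof (cases "OS = {}")
    case True
    then have "G = topspace X" using O(3) Gsub by auto
    then show ?thesis by (simp add: closed_imp_fsigma_in)
  next
    case False
    define Oi where "Oi = from_nat_into OS"
    have rO: "range Oi = OS" unfolding Oi_def using range_from_nat_into[OF False O(1)] .
    have Oop: "openin X (Oi i)" for i using rO O(2) by blast
    have GO: "G = \<Inter>(range Oi)" using rO O(3) by simp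
    define W where "W n = topspace X \<inter> (\<Inter>i\<in>{..n}. Oi i)" for n
    have Wop: "openin X (W n)" for n unfolding W_def
      by (intro openin_Int openin_topspace openin_INT2) (auto simp: Oop)
    have Wdec: "W n \<subseteq> W m" if "m \<le> n" for m n unfolding W_def using that by auto
    have GW: "G \<subseteq> W n" for n unfolding W_def GO using Gsub GO by auto
    define W' where "W' n = (case n of 0 \<Rightarrow> topspace X | Suc k \<Rightarrow> W k)" for n
    have W'op: "openin X (W' n)" for n unfolding W'_def by (cases n) (auto simp: Wop)
    have W'sub: "W' n \<subseteq> topspace X" for n unfolding W'_def W_def by (cases n) auto
    have exd: "\<forall>n. \<exists>d :: nat \<Rightarrow> _. (\<forall>k. openin X (d k) \<and> closedin X (d k)) \<and> W' n = \<Union>(range d)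
          \<and> (\<forall>k k'. k \<noteq> k' \<longrightarrow> d k \<inter> d k' = {})"
      using CLOPEN_SEQ[OF clopen_base W'op] by blast
    from choice[OF exd] obtain d :: "nat \<Rightarrow> nat \<Rightarrow> _" where d: "\<forall>n. (\<forall>k. openin X (d n k) \<and> closedin X (d n k)) \<and> W' n = \<Union>(range (d n))
          \<and> (\<forall>k k'. k \<noteq> k' \<longrightarrow> d n k \<inter> d n k' = {})"
      by (elim exE) (erule that)
    have dcl: "openin X (d n k)" "closedin X (d n k)" for n k
      using conjunct1[OF spec[OF d, of n]] by auto
    have dU: "W' n = \<Union>(range (d n))" for n
      using conjunct1[OF conjunct2[OF spec[OF d, of n]]] .
    have ddis: "d n k \<inter> d n k' = {}" if "k \<noteq> k'" for n k k'
      using conjunct2[OF conjunct2[OF spec[OF d, of n]]] that by auto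
    define Z2 where "Z2 n k = d n k - W n" for n k
    define Z where "Z j = Z2 (fst (prod_decode j)) (snd (prod_decode j))" for j
    have Z2cl: "closedin X (Z2 n k)" for n k unfolding Z2_def using dcl Wop by blast
    have Zcl: "closedin X (Z j)" for j unfolding Z_def by (rule Z2cl)
    have Z2sub: "Z2 n k \<subseteq> topspace X" for n k
    proof -
      have "d n k \<subseteq> W' n" unfolding dU[of n] by blast
      then show ?thesis unfolding Z2_def using W'sub[of n] by blast
    qed
    have Zsub: "Z j \<subseteq> topspace X" for j unfolding Z_def by (rule Z2sub)
    have ZG: "Z j \<inter> G = {}" for j unfolding Z_def Z2_def using GW by blast
    have Z2uniq: "n = n' \<and> k = k'" if "x \<in> Z2 n k" "x \<in> Z2 n' k'" for x n k n' k'
    proof -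
      have A: "x \<in> W' n \<and> x \<notin> W n" if "x \<in> Z2 n k" for n k
      proof -
        have "d n k \<subseteq> W' n" unfolding dU[of n] by blast
        then show ?thesis using that unfolding Z2_def by blast
      qed
      have B: "False" if hB: "x \<in> Z2 a b" "x \<in> Z2 a' b'" "a < a'" for a b a' b'
      proof -
        obtain c where c: "a' = Suc c" using hB(3) by (cases a') auto
        have "x \<in> W c" using A[OF hB(2)] unfolding W'_def c by simp
        moreover have "W c \<subseteq> W a" using hB(3) c by (intro Wdec) simp
        ultimately show False using A[OF hB(1)] by blast
      qed
      have nn: "n = n'"
      proof (rule ccontr)
        assume "n \<noteq> n'"
        then consider "n < n'" | "n' < n" by linarith
        then show False by cases (use B that in blast)+
      qed
      have "x \<in> d n k" "x \<in> d n k'" using that nn unfolding Z2_def by auto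
      then have "k = k'" using ddis[of k k' n] by blast
      then show ?thesis using nn by simp
    qed
    have Zfin: "finite {j. x \<in> Z j}" for x
    proof (rule subsingleton_finite)
      fix a b assume "a \<in> {j. x \<in> Z j}" "b \<in> {j. x \<in> Z j}"
      then have "x \<in> Z a" "x \<in> Z b" by auto
      then have "prod_decode a = prod_decode b" unfolding Z_def using Z2uniq by (simp add: prod_eq_iff)
      then show "a = b" by (metis prod_decode_inverse)
    qed
    have Zcov: "\<exists>j. x \<in> Z j" if "x \<in> topspace X" "x \<notin> G" for x
    proof -
      have "\<exists>n. x \<notin> W n"
      proof (rule ccontr)
        assume "\<not> (\<exists>n. x \<notin> W n)"
        then have "x \<in> Oi i" for i using W_def by blast
        then have "x \<in> G" unfolding GO by blast
        then show False using that by blast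
      qed
      then obtain n0 where n0: "x \<notin> W n0" by blast
      define a where "a = (LEAST n. x \<notin> W n)"
      have xa: "x \<notin> W a" unfolding a_def by (rule LeastI[of "\<lambda>n. x \<notin> W n", OF n0])
      have "x \<in> W' a"
      proof (cases a)
        case 0 then show ?thesis using that unfolding W'_def by simp
      next
        case (Suc c)
        have "x \<in> W c"
        proof (rule ccontr)
          assume "x \<notin> W c"
          then have "a \<le> c" unfolding a_def by (rule Least_le)
          then show False using Suc by simp
        qed
        then show ?thesis unfolding W'_def Suc by simp
      qed
      then obtain k where "x \<in> d a k" unfolding dU[of a] by blast
      then have "x \<in> Z2 a k" unfolding Z2_def using xa by blast
      then have "x \<in> Z (prod_encode (a, k))" unfolding Z_def by simp
      then show ?thesis by blast
    qed
    have Zop: "openin X (topspace X - Z j)" for j by (intro openin_diff openin_topspace Zcl)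
    have exc: "\<forall>j. \<exists>d :: nat \<Rightarrow> _. (\<forall>k. openin X (d k) \<and> closedin X (d k)) \<and> topspace X - Z j = \<Union>(range d)
          \<and> (\<forall>k k'. k \<noteq> k' \<longrightarrow> d k \<inter> d k' = {})"
      using CLOPEN_SEQ[OF clopen_base Zop] by blast
    from choice[OF exc] obtain cz :: "nat \<Rightarrow> nat \<Rightarrow> _" where cz: "\<forall>j. (\<forall>k. openin X (cz j k) \<and> closedin X (cz j k)) \<and> topspace X - Z j = \<Union>(range (cz j))
          \<and> (\<forall>k k'. k \<noteq> k' \<longrightarrow> cz j k \<inter> cz j k' = {})"
      by (elim exE) (erule that)
    have czcl: "openin X (cz j k)" "closedin X (cz j k)" for j k
      using conjunct1[OF spec[OF cz, of j]] by auto
    have czU: "topspace X - Z j = \<Union>(range (cz j))" for j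
      using conjunct1[OF conjunct2[OF spec[OF cz, of j]]] .
    have czdis: "cz j k \<inter> cz j k' = {}" if "k \<noteq> k'" for j k k'
      using conjunct2[OF conjunct2[OF spec[OF cz, of j]]] that by auto
    define \<Psi> where "\<Psi> x j = idx (cz j) x" for x j
    have Psi_inf: "\<Psi> x j = \<infinity> \<longleftrightarrow> x \<in> Z j" if "x \<in> topspace X" for x j
    proof -
      have "\<Psi> x j = \<infinity> \<longleftrightarrow> x \<notin> \<Union>(range (cz j))" unfolding \<Psi>_def idx_inf by blast
      also have "\<dots> \<longleftrightarrow> x \<in> Z j" unfolding czU[of j, symmetric] using that by blast
      finally show ?thesis .
    qed
    have cont: "continuous_map X EF_top \<Psi>"
      unfolding EF_top_def continuous_map_in_subtopology Nbar_top_def continuous_map_componentwise_UNIV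
    proof (intro conjI allI)
      fix n show "continuous_map X euclidean (\<lambda>x. \<Psi> x n)"
        unfolding \<Psi>_def by (rule idx_cont) (rule czcl)+
    next
      show "\<Psi> \<in> topspace X \<rightarrow> EF_set"
      proof
        fix x assume x: "x \<in> topspace X"
        have e: "{n. \<Psi> x n = \<infinity>} = {j. x \<in> Z j}" using Psi_inf[OF x] by blast
        show "\<Psi> x \<in> EF_set" unfolding EF_set_def mem_Collect_eq e by (rule Zfin)
      qed
    qed
    then obtain g where g: "\<forall>f\<in>\<Psi> ` topspace X. finite {n. \<not> f n \<le> enat (g n)}"
      using P3 unfolding EF_bounded_def by blast
    define K where "K m = topspace X \<inter> (\<Inter>j\<in>{m..}. (\<Union>i\<in>{..g j}. cz j i))" for m
    have Kcl: "closedin X (K m)" for m unfolding K_def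
      by (intro closedin_Int closedin_topspace closedin_INT closedin_Union) (auto simp: czcl)
    have Dop: "openin X (topspace X - (\<Union>j\<in>{..<m}. Z j))" for m
      by (intro openin_diff openin_topspace closedin_Union) (auto simp: Zcl)
    have exD: "\<forall>m. \<exists>d :: nat \<Rightarrow> _. (\<forall>k. openin X (d k) \<and> closedin X (d k)) \<and> topspace X - (\<Union>j\<in>{..<m}. Z j) = \<Union>(range d)
          \<and> (\<forall>k k'. k \<noteq> k' \<longrightarrow> d k \<inter> d k' = {})"
      using CLOPEN_SEQ[OF clopen_base Dop] by blast
    from choice[OF exD] obtain dd :: "nat \<Rightarrow> nat \<Rightarrow> _" where dd: "\<forall>m. (\<forall>k. openin X (dd m k) \<and> closedin X (dd m k)) \<and> topspace X - (\<Union>j\<in>{..<m}. Z j) = \<Union>(range (dd m))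
          \<and> (\<forall>k k'. k \<noteq> k' \<longrightarrow> dd m k \<inter> dd m k' = {})"
      by (elim exE) (erule that)
    have ddcl: "openin X (dd m k)" "closedin X (dd m k)" for m k
      using conjunct1[OF spec[OF dd, of m]] by auto
    have ddU: "topspace X - (\<Union>j\<in>{..<m}. Z j) = \<Union>(range (dd m))" for m
      using conjunct1[OF conjunct2[OF spec[OF dd, of m]]] .
    have dddis: "dd m k \<inter> dd m k' = {}" if "k \<noteq> k'" for m k k'
      using conjunct2[OF conjunct2[OF spec[OF dd, of m]]] that by auto
    define \<K> where "\<K> = range (\<lambda>p. K (fst p) \<inter> dd (fst p) (snd p))"
    have "\<Union>\<K> = G"
    proof
      show "\<Union>\<K> \<subseteq> G"
      proof
        fix x assume "x \<in> \<Union>\<K>"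
        then obtain m i where xK: "x \<in> K m" and xd: "x \<in> dd m i" unfolding \<K>_def by auto
        have xt: "x \<in> topspace X" using xK unfolding K_def by blast
        have "x \<notin> Z j" for j
        proof (cases "j < m")
          case True
          have "x \<in> topspace X - (\<Union>j\<in>{..<m}. Z j)" using xd unfolding ddU[of m] by blast
          then show ?thesis using True by blast
        next
          case False
          then have "x \<in> (\<Union>i\<in>{..g j}. cz j i)" using xK unfolding K_def by auto
          then have "x \<in> topspace X - Z j" unfolding czU[of j] by blast
          then show ?thesis by blast
        qed
        then show "x \<in> G"
        proof -
          assume nz: "\<And>j. x \<notin> Z j"
          show "x \<in> G"
          proof (rule ccontr)
            assume "x \<notin> G"
            then obtain j where "x \<in> Z j" using Zcov[OF xt] by blast
            then show False using nz by blast
          qed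
        qed
      qed
      show "G \<subseteq> \<Union>\<K>"
      proof
        fix x assume xG: "x \<in> G"
        have xt: "x \<in> topspace X" using xG Gsub by blast
        have "finite {n. \<not> \<Psi> x n \<le> enat (g n)}" using bspec[OF g imageI[OF xt]] .
        then obtain m where m: "{n. \<not> \<Psi> x n \<le> enat (g n)} \<subseteq> {..<m}"
          using finite_nat_bounded by blast
        have "x \<in> K m"
        proof -
          have "x \<in> (\<Union>i\<in>{..g j}. cz j i)" if "j \<ge> m" for j
          proof -
            have "\<Psi> x j \<le> enat (g j)" using m that by force
            then show ?thesis unfolding \<Psi>_def idx_le by auto
          qed
          then show ?thesis unfolding K_def using xt by blast
        qed
        moreover have "x \<notin> Z j" for j using ZG xG by blast
        then have "x \<in> topspace X - (\<Union>j\<in>{..<m}. Z j)" using xt by blast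
        then obtain i where "x \<in> dd m i" unfolding ddU[of m] by blast
        ultimately have "x \<in> K m \<inter> dd m i" by blast
        moreover have "K m \<inter> dd m i \<in> \<K>" unfolding \<K>_def
          by (rule range_eqI[of _ _ "(m, i)"]) simp
        ultimately show "x \<in> \<Union>\<K>" by (rule UnionI[rotated])
      qed
    qed
    moreover have "countable \<K>" unfolding \<K>_def by simp
    moreover have "\<K> \<subseteq> Collect (closedin X)" unfolding \<K>_def
      by (auto intro!: closedin_Int Kcl ddcl)
    ultimately show ?thesis unfolding fsigma_in_def union_of_def by (intro exI[of _ \<K>]) simp
  qed
qed



lemma D4:
  assumes clopen_base: "\<And>U. openin X U \<Longrightarrow>
     \<exists>\<C>. countable \<C> \<and> (\<forall>C\<in>\<C>. openin X C \<and> closedin X C) \<and> U = \<Union>\<C>"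
    and UX: "Ufin_O_Gamma X" and sig: "sigma_space X" and Y: "Y \<subseteq> topspace X"
  shows "Ufin_O_Gamma (subtopology X Y)"
  unfolding Ufin_O_Gamma_def
proof (intro allI impI)
  fix \<U> :: "nat \<Rightarrow> 'a set set"
  assume cov: "\<forall>n. ctbl_open_cover_no_fin_sub (subtopology X Y) (\<U> n)"
  have topY: "topspace (subtopology X Y) = Y" using Y by auto
  have ex: "\<forall>n. \<exists>c :: nat \<Rightarrow> _. (\<forall>j. openin X (c j) \<and> closedin X (c j))
           \<and> (\<forall>j. \<exists>U\<in>\<U> n. c j \<inter> Y \<subseteq> U) \<and> Y \<subseteq> \<Union>(range c)"
    using PIECES[OF clopen_base Y] cov by blast
  from choice[OF ex] obtain c :: "nat \<Rightarrow> nat \<Rightarrow> _" where c: "\<forall>n. (\<forall>j. openin X (c n j) \<and> closedin X (c n j))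
           \<and> (\<forall>j. \<exists>U\<in>\<U> n. c n j \<inter> Y \<subseteq> U) \<and> Y \<subseteq> \<Union>(range (c n))"
    by (elim exE) (erule that)
  have ccl: "openin X (c n j)" "closedin X (c n j)" for n j
    using conjunct1[OF spec[OF c, of n]] by auto
  have cU: "\<exists>U\<in>\<U> n. c n j \<inter> Y \<subseteq> U" for n j
    using conjunct1[OF conjunct2[OF spec[OF c, of n]]] by blast
  have cY: "Y \<subseteq> \<Union>(range (c n))" for n
    using conjunct2[OF conjunct2[OF spec[OF c, of n]]] .
  have Yne: "Y \<noteq> {}"
  proof
    assume "Y = {}"
    then have "{} \<subseteq> \<U> 0 \<and> finite {} \<and> topspace (subtopology X Y) \<subseteq> \<Union>{}" using topY by simp
    moreover have "\<not> (\<exists>F\<subseteq>\<U> 0. finite F \<and> topspace (subtopology X Y) \<subseteq> \<Union>F)"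
      using cov unfolding ctbl_open_cover_no_fin_sub_def by blast
    ultimately show False by blast
  qed
  define On where "On n = topspace X \<inter> \<Union>(range (c n))" for n
  define G where "G = \<Inter>(range On)"
  have Onop: "openin X (On n)" for n unfolding On_def
    by (intro openin_Int openin_topspace openin_Union) (auto simp: ccl)
  have Gsub: "G \<subseteq> topspace X" unfolding G_def On_def by blast
  have gd: "gdelta_in X G" unfolding gdelta_in_alt
  proof (intro conjI Gsub)
    show "(countable intersection_of openin X) G" unfolding intersection_of_def
      by (intro exI[of _ "range On"]) (auto simp: G_def Onop)
  qed
  have "fsigma_in X G" using sig gd unfolding sigma_space_def by blast
  then obtain \<K> where K: "countable \<K>" "\<K> \<subseteq> Collect (closedin X)" "\<Union>\<K> = G"
    unfolding fsigma_in_def union_of_def by (elim exE conjE) (rule that)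
  have YG: "Y \<subseteq> G"
  proof
    fix y assume y: "y \<in> Y"
    have "y \<in> On n" for n using y Y cY[of n] unfolding On_def by blast
    then show "y \<in> G" unfolding G_def by blast
  qed
  have Kne: "\<K> \<noteq> {}" using Yne YG K(3) by auto
  have gK: "\<exists>g. \<forall>x\<in>K. finite {n. x \<notin> K \<inter> (\<Union>j\<in>{..g n}. c n j)}" if KK: "K \<in> \<K>" for K
  proof -
    have Kc: "closedin X K" using KK K(2) by blast
    have KG: "K \<subseteq> G" using KK K(3) by blast
    have KX: "K \<subseteq> topspace X" using Kc by (rule closedin_subset)
    have "\<exists>g. \<forall>x\<in>topspace (subtopology X K). finite {n. x \<notin> K \<inter> (\<Union>j\<in>{..g n}. c n j)}"
    proof (rule L1)
      show "Ufin_O_Gamma (subtopology X K)" by (rule CH[OF clopen_base UX Kc])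
      fix n k
      show "openin (subtopology X K) (K \<inter> (\<Union>j\<in>{..k}. c n j))"
        by (intro openin_subtopology_Int2 openin_Union) (auto simp: ccl)
      show "K \<inter> (\<Union>j\<in>{..k}. c n j) \<subseteq> K \<inter> (\<Union>j\<in>{..Suc k}. c n j)"
        by (auto simp: atMost_Suc)
    next
      fix n
      show "topspace (subtopology X K) \<subseteq> (\<Union>k. K \<inter> (\<Union>j\<in>{..k}. c n j))"
      proof
        fix x assume "x \<in> topspace (subtopology X K)"
        then have xK: "x \<in> K" by simp
        then have "x \<in> On n" using KG unfolding G_def by blast
        then obtain j where "x \<in> c n j" unfolding On_def by blast
        then have "x \<in> K \<inter> (\<Union>j'\<in>{..j}. c n j')" using xK by blast
        then show "x \<in> (\<Union>k. K \<inter> (\<Union>j\<in>{..k}. c n j))" by blast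
      qed
    qed
    then show ?thesis using KX by (simp add: Int_absorb1)
  qed
  have gK': "\<forall>K\<in>\<K>. \<exists>g. \<forall>x\<in>K. finite {n. x \<notin> K \<inter> (\<Union>j\<in>{..g n}. c n j)}"
    using gK by blast
  from bchoice[OF gK'] obtain GK :: "_ \<Rightarrow> nat \<Rightarrow> nat" where
    GK: "\<forall>K\<in>\<K>. \<forall>x\<in>K. finite {n. x \<notin> K \<inter> (\<Union>j\<in>{..GK K n}. c n j)}"
    by (elim exE) (erule that)
  define kk where "kk = from_nat_into \<K>"
  have rk: "range kk = \<K>" unfolding kk_def using range_from_nat_into[OF Kne K(1)] .
  define g where "g n = Max ((\<lambda>i. GK (kk i) n) ` {..n})" for n
  show "\<exists>\<F>. (\<forall>n. finite (\<F> n) \<and> \<F> n \<subseteq> \<U> n) \<and> point_cofinite_cover (subtopology X Y) (range (\<lambda>n. \<Union>(\<F> n)))"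
  proof (rule SEL[of _ _ c g])
    show "ctbl_open_cover_no_fin_sub (subtopology X Y) (\<U> n)" for n using cov by blast
    show "\<exists>U\<in>\<U> n. c n j \<inter> topspace (subtopology X Y) \<subseteq> U" for n j
      unfolding topY by (rule cU)
    fix y assume "y \<in> topspace (subtopology X Y)"
    then have y: "y \<in> Y" using topY by simp
    then have "y \<in> \<Union>\<K>" using YG K(3) by blast
    then obtain i where yi: "y \<in> kk i" using rk by blast
    have kin: "kk i \<in> \<K>" using rk by blast
    have fin: "finite {n. y \<notin> kk i \<inter> (\<Union>j\<in>{..GK (kk i) n}. c n j)}"
      using bspec[OF bspec[OF GK kin] yi] .
    have "{n. \<not>(\<exists>j\<le>g n. y \<in> c n j)} \<subseteq> {..<i} \<union> {n. y \<notin> kk i \<inter> (\<Union>j\<in>{..GK (kk i) n}. c n j)}"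
    proof
      fix n assume n: "n \<in> {n. \<not>(\<exists>j\<le>g n. y \<in> c n j)}"
      show "n \<in> {..<i} \<union> {n. y \<notin> kk i \<inter> (\<Union>j\<in>{..GK (kk i) n}. c n j)}"
      proof (cases "n < i")
        case False
        have le: "GK (kk i) n \<le> g n" unfolding g_def
          by (rule Max_ge) (use False in auto)
        have "y \<notin> kk i \<inter> (\<Union>j\<in>{..GK (kk i) n}. c n j)"
        proof
          assume "y \<in> kk i \<inter> (\<Union>j\<in>{..GK (kk i) n}. c n j)"
          then obtain j where "j \<le> GK (kk i) n" "y \<in> c n j" by auto
          then have "\<exists>j\<le>g n. y \<in> c n j" using le by (intro exI[of _ j]) simp
          then show False using n by blast
        qed
        then show ?thesis by simp
      qed simp
    qed
    moreover have "finite ({..<i} \<union> {n. y \<notin> kk i \<inter> (\<Union>j\<in>{..GK (kk i) n}. c n j)})"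
      using fin by simp
    ultimately show "finite {n. \<not>(\<exists>j\<le>g n. y \<in> c n j)}" by (rule finite_subset)
  qed
qed

theorem mainTheorem3:
  fixes X :: "'a topology"
  assumes clopen_base: "\<And>U. openin X U \<Longrightarrow>
     \<exists>\<C>. countable \<C> \<and> (\<forall>C\<in>\<C>. openin X C \<and> closedin X C) \<and> U = \<Union>\<C>"
  shows "((\<forall>Y. Y \<subseteq> topspace X \<longrightarrow> Ufin_O_Gamma (subtopology X Y))
            \<longleftrightarrow> (\<forall>Y. gdelta_in X Y \<longrightarrow> Ufin_O_Gamma (subtopology X Y)))
       \<and> ((\<forall>Y. gdelta_in X Y \<longrightarrow> Ufin_O_Gamma (subtopology X Y))
            \<longleftrightarrow> (\<forall>\<Psi>. continuous_map X EF_top \<Psi> \<longrightarrow> EF_bounded (\<Psi> ` topspace X)))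
       \<and> ((\<forall>\<Psi>. continuous_map X EF_top \<Psi> \<longrightarrow> EF_bounded (\<Psi> ` topspace X))
            \<longleftrightarrow> (Ufin_O_Gamma X \<and> sigma_space X))"
proof -
  let ?P1 = "\<forall>Y. Y \<subseteq> topspace X \<longrightarrow> Ufin_O_Gamma (subtopology X Y)"
  let ?P2 = "\<forall>Y. gdelta_in X Y \<longrightarrow> Ufin_O_Gamma (subtopology X Y)"
  let ?P3 = "\<forall>\<Psi>. continuous_map X EF_top \<Psi> \<longrightarrow> EF_bounded (\<Psi> ` topspace X)"
  let ?P4 = "Ufin_O_Gamma X \<and> sigma_space X"
  have i12: "?P1 \<Longrightarrow> ?P2" using gdelta_in_subset by blast
  have i23: "?P2 \<Longrightarrow> ?P3" using B23 by blast
  have i34: "?P3 \<Longrightarrow> ?P4" using C3a[OF clopen_base] C3b[OF clopen_base] by blast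
  have i41: "?P4 \<Longrightarrow> ?P1" using D4[OF clopen_base] by blast
  show ?thesis using i12 i23 i34 i41 by blast
qed


end
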